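(* Let $n,m$ be positive integers, $\lambda=(\lambda_1,\dots,\lambda_n)\in\mathcal{P}^m_n$, and let $k_{i,j}=k_{i,j}(\lambda)$ be defined recursively by $$k_{i,j}=\min\left\{m,\left\lceil\frac{\lambda_i-\sum_{\ell=j+1}^n k_{i,\ell}+\sum_{\ell=i+1}^j k_{\ell,j}}{j-i+1}\right\rceil\right\},\quad 1\le i\le j\le n.$$ Then $\lambda_i=\sum_{j=i}^n k_{i,j}$ for every $i\in\{1,\dots,n\}$.
   Context: $\mathcal{P}^m_n$ is the set of integer partitions $(\lambda_1\ge\cdots\ge\lambda_n\ge0)$ with $\lambda_i\le m(n-i+1)$ for all $i$. The recursion is carried out in order of decreasing $i$ and, for fixed $i$, decreasing $j$. *)

theory Defs
  imports Main "HOL.Real"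
begin

text \<open>Partitions are represented 1-indexed as functions lam :: nat => nat;
  only the values lam 1, ..., lam n are relevant.\<close>

definition in_P :: "nat \<Rightarrow> nat \<Rightarrow> (nat \<Rightarrow> nat) \<Rightarrow> bool" where
  "in_P m n lam \<longleftrightarrow>
     (\<forall>i j. 1 \<le> i \<longrightarrow> i \<le> j \<longrightarrow> j \<le> n \<longrightarrow> lam j \<le> lam i) \<and>
     (\<forall>i. 1 \<le> i \<longrightarrow> i \<le> n \<longrightarrow> lam i \<le> m * (n - i + 1))"

function kk :: "nat \<Rightarrow> nat \<Rightarrow> (nat \<Rightarrow> nat) \<Rightarrow> nat \<Rightarrow> nat \<Rightarrow> int" where
  "kk m n lam i j =
     (if 1 \<le> i \<and> i \<le> j \<and> j \<le> n then
        min (int m)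
          \<lceil>(real (lam i) - (\<Sum>l\<in>{j+1..n}. real_of_int (kk m n lam i l))
             + (\<Sum>l\<in>{i+1..j}. real_of_int (kk m n lam l j)))
           / real (j - i + 1)\<rceil>
      else 0)"
  by pat_completeness auto
termination
  by (relation "measures [\<lambda>(m,n,lam,i,j). n + 1 - i, \<lambda>(m,n,lam,i,j). n + 1 - j]") auto

end

theory Submission
  imports Defs
begin

declare kk.simps [simp del]

definition RR :: "nat \<Rightarrow> nat \<Rightarrow> (nat \<Rightarrow> nat) \<Rightarrow> nat \<Rightarrow> nat \<Rightarrow> int" where
  "RR m n lam i j = int (lam i) - (\<Sum>l\<in>{j+1..n}. kk m n lam i l)"

definition CC :: "nat \<Rightarrow> nat \<Rightarrow> (nat \<Rightarrow> nat) \<Rightarrow> nat \<Rightarrow> nat \<Rightarrow> int" where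
  "CC m n lam i j = (\<Sum>l\<in>{i+1..j}. kk m n lam l j)"

lemma kk_unfold:
  assumes "1 \<le> i" "i \<le> j" "j \<le> n"
  shows "kk m n lam i j = min (int m) \<lceil>real_of_int (RR m n lam i j + CC m n lam i j) / real (j - i + 1)\<rceil>"
  apply (subst kk.simps)
  using assms by (simp add: RR_def CC_def of_int_sum)

lemma ceil_div_le:
  assumes "d > 0"
  shows "(\<lceil>real_of_int x / real d\<rceil> \<le> b) = (x \<le> int d * b)"
proof -
  have "(\<lceil>real_of_int x / real d\<rceil> \<le> b) = (real_of_int x / real d \<le> real_of_int b)"
    by (simp add: ceiling_le_iff)
  also have "\<dots> = (real_of_int x \<le> real d * real_of_int b)"
    using assms by (simp add: pos_divide_le_eq mult.commute)
  also have "\<dots> = (x \<le> int d * b)"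
    by (metis of_int_le_iff of_int_mult of_int_of_nat_eq)
  finally show ?thesis .
qed

lemma ceil_div_ge:
  assumes "d > 0"
  shows "x \<le> int d * \<lceil>real_of_int x / real d\<rceil>"
  using ceil_div_le[OF assms, of x "\<lceil>real_of_int x / real d\<rceil>"] by simp

lemma ceil_div_nonneg:
  assumes "d > 0" "x \<ge> 0"
  shows "\<lceil>real_of_int x / real d\<rceil> \<ge> 0"
proof -
  have "real_of_int x / real d \<ge> 0" using assms by simp
  then show ?thesis by linarith
qed

lemma key_ineq:
  fixes R S c a k mm :: int and d :: nat
  assumes "d \<ge> 1" "R \<ge> S"
    and a: "a = min mm \<lceil>real_of_int (S + c) / real d\<rceil>"
    and k: "k = min mm \<lceil>real_of_int (R + (a + c)) / real (d+1)\<rceil>"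
  shows "R - k \<ge> S - a"
proof (cases "k \<le> a")
  case True then show ?thesis using assms by simp
next
  case False
  have am: "a < mm" using False k a by auto
  hence "a = \<lceil>real_of_int (S + c) / real d\<rceil>" using a by simp
  hence "S + c \<le> int d * a" using ceil_div_ge[of d "S+c"] assms(1) by simp
  moreover have "0 \<le> int d * (R - S)" using assms(2) by simp
  ultimately have "R + (a + c) \<le> int (d+1) * (a + (R - S))"
    by (simp add: algebra_simps)
  hence "\<lceil>real_of_int (R + (a + c)) / real (d+1)\<rceil> \<le> a + (R - S)"
    using ceil_div_le[of "d+1" "R + (a+c)" "a + (R - S)"] by simp
  hence "k \<le> a + (R - S)" using k by simp
  then show ?thesis by simp
qed



lemma RR_step:
  assumes "j < n"
  shows "RR m n lam i j = RR m n lam i (j+1) - kk m n lam i (j+1)"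
  using assms unfolding RR_def
  by (simp add: sum.atLeast_Suc_atMost)

lemma CC_split:
  assumes "i + 1 \<le> j"
  shows "CC m n lam i j = kk m n lam (i+1) j + CC m n lam (i+1) j"
  using assms unfolding CC_def
  by (simp add: sum.atLeast_Suc_atMost)

lemma sum_split_at:
  fixes a j n :: nat and f :: "nat \<Rightarrow> int"
  assumes "a \<le> j + 1" "j \<le> n"
  shows "(\<Sum>l\<in>{a..n}. f l) = (\<Sum>l\<in>{a..j}. f l) + (\<Sum>l\<in>{j+1..n}. f l)"
  using sum.ub_add_nat[of a j f "n - j"] assms by simp

lemma row_step:
  assumes P: "in_P m n lam" and i1: "1 \<le> i" and iN: "i \<le> n"
    and IH: "\<And>l. i < l \<Longrightarrow> l \<le> n \<Longrightarrow>
       (\<forall>j\<in>{l..n}. kk m n lam l j \<ge> 0) \<and> int (lam l) = (\<Sum>j\<in>{l..n}. kk m n lam l j)"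
  shows "(\<forall>j\<in>{i..n}. kk m n lam i j \<ge> 0) \<and> int (lam i) = (\<Sum>j\<in>{i..n}. kk m n lam i j)"
proof -
  let ?K = "kk m n lam"
  let ?R = "RR m n lam"
  let ?C = "CC m n lam"
  have Rnext_nonneg: "?R (i+1) j \<ge> 0" if "i < n" "i \<le> j" "j \<le> n" for j
  proof -
    from IH[of "i+1"] that have h: "int (lam (i+1)) = (\<Sum>l\<in>{i+1..n}. ?K (i+1) l)"
      and nn: "\<forall>l\<in>{i+1..n}. ?K (i+1) l \<ge> 0" by auto
    have "(\<Sum>l\<in>{i+1..n}. ?K (i+1) l) = (\<Sum>l\<in>{i+1..j}. ?K (i+1) l) + (\<Sum>l\<in>{j+1..n}. ?K (i+1) l)"
      by (rule sum_split_at) (use that in auto)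
    hence "?R (i+1) j = (\<Sum>l\<in>{i+1..j}. ?K (i+1) l)" using h unfolding RR_def by simp
    also have "\<dots> \<ge> 0" using nn that by (intro sum_nonneg) auto
    finally show ?thesis .
  qed
  have Rge: "?R i j \<ge> ?R (i+1) j" if "i < n" "i \<le> j" "j \<le> n" for j
    using that(3,2)
  proof (induction j rule: inc_induct)
    case base
    have "lam (i+1) \<le> lam i" using P i1 that(1) unfolding in_P_def by auto
    then show ?case unfolding RR_def by simp
  next
    case (step j)
    define d where "d = j + 1 - i"
    have d1: "d \<ge> 1" using step d_def by simp
    have dd: "d = j + 1 - (i + 1) + 1" using d_def step by simp
    have dk: "j + 1 - i + 1 = d + 1" using d_def step by simp
    have a: "?K (i+1) (j+1) = min (int m) \<lceil>real_of_int (?R (i+1) (j+1) + ?C (i+1) (j+1)) / real d\<rceil>"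
      unfolding dd by (rule kk_unfold) (use step in auto)
    have CCs: "?C i (j+1) = ?K (i+1) (j+1) + ?C (i+1) (j+1)"
      by (rule CC_split) (use step in auto)
    have k0: "?K i (j+1) = min (int m) \<lceil>real_of_int (?R i (j+1) + ?C i (j+1)) / real (j + 1 - i + 1)\<rceil>"
      by (rule kk_unfold) (use step i1 in auto)
    have k: "?K i (j+1) = min (int m) \<lceil>real_of_int (?R i (j+1) + (?K (i+1) (j+1) + ?C (i+1) (j+1))) / real (d+1)\<rceil>"
      using k0 by (simp only: CCs dk)
    have "?R i (j+1) - ?K i (j+1) \<ge> ?R (i+1) (j+1) - ?K (i+1) (j+1)"
      by (rule key_ineq[OF d1 _ a k]) (use step in simp)
    then show ?case using RR_step[of j n m lam i] RR_step[of j n m lam "i+1"] step by simp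
  qed
  have Rnn: "?R i j \<ge> 0" if "i \<le> j" "j \<le> n" for j
  proof (cases "i < n")
    case True then show ?thesis using Rge[OF True that] Rnext_nonneg[OF True that] by simp
  next
    case False then have "j = n" using that by simp
    then show ?thesis unfolding RR_def by simp
  qed
  have Cnn: "?C i j \<ge> 0" if "i \<le> j" "j \<le> n" for j
    unfolding CC_def using IH that by (intro sum_nonneg) auto
  have Knn: "?K i j \<ge> 0" if "i \<le> j" "j \<le> n" for j
  proof -
    have "\<lceil>real_of_int (?R i j + ?C i j) / real (j - i + 1)\<rceil> \<ge> 0"
      by (rule ceil_div_nonneg) (use Rnn[OF that] Cnn[OF that] in auto)
    then show ?thesis using kk_unfold[of i j n m lam] that i1 by simp
  qed
  have Rle: "?R i j \<le> int m * int (j - i + 1)" if "i \<le> j" "j \<le> n" for j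
    using that(2,1)
  proof (induction j rule: inc_induct)
    case base
    have "lam i \<le> m * (n - i + 1)" using P i1 iN unfolding in_P_def by auto
    hence "int (lam i) \<le> int m * int (n - i + 1)" by (metis of_nat_le_iff of_nat_mult)
    then show ?case unfolding RR_def by simp
  next
    case (step j)
    define D where "D = j + 1 - i + 1"
    have D1: "D \<ge> 1" using D_def by simp
    have DD: "int D = int (j - i + 1) + 1" using D_def step by simp
    define R' where "R' = ?R i (j+1)"
    have IHs: "R' \<le> int m * int D" using step D_def R'_def by simp
    have k: "?K i (j+1) = min (int m) \<lceil>real_of_int (R' + ?C i (j+1)) / real D\<rceil>"
      using kk_unfold[of i "j+1" n m lam] step D_def i1 R'_def by simp
    have eq: "?R i j = R' - ?K i (j+1)" using RR_step[of j n m lam i] step R'_def by simp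
    show ?case
    proof (cases "?K i (j+1) = int m")
      case True
      then show ?thesis using eq IHs DD by (simp add: algebra_simps)
    next
      case False
      hence kc: "?K i (j+1) = \<lceil>real_of_int (R' + ?C i (j+1)) / real D\<rceil>" using k by linarith
      have "R' + ?C i (j+1) \<le> int D * ?K i (j+1)"
        unfolding kc by (rule ceil_div_ge) (use D1 in simp)
      hence h1: "R' \<le> int D * ?K i (j+1)" using Cnn[of "j+1"] step by simp
      have R'nn: "R' \<ge> 0" using Rnn[of "j+1"] step R'_def by simp
      have "int D * (R' - ?K i (j+1)) \<le> (int D - 1) * R'"
        using h1 by (simp add: algebra_simps)
      also have "\<dots> \<le> (int D - 1) * (int m * int D)"
        using IHs D1 by (intro mult_left_mono) auto
      also have "\<dots> = int D * (int m * int (j - i + 1))" using DD by (simp add: algebra_simps)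
      finally have "R' - ?K i (j+1) \<le> int m * int (j - i + 1)"
        using D1 by (simp add: mult_le_cancel_left)
      then show ?thesis using eq by simp
    qed
  qed
  have Rii: "?R i i \<le> int m" using Rle[of i] iN by simp
  have Kii: "?K i i = ?R i i"
  proof -
    have "?C i i = 0" unfolding CC_def by simp
    then have "?K i i = min (int m) (?R i i)" using kk_unfold[of i i n m lam] i1 iN by simp
    then show ?thesis using Rii by simp
  qed
  have "(\<Sum>j\<in>{i..n}. ?K i j) = ?K i i + (\<Sum>j\<in>{i+1..n}. ?K i j)"
    using iN by (simp add: sum.atLeast_Suc_atMost)
  also have "\<dots> = int (lam i)" using Kii unfolding RR_def by simp
  finally show ?thesis using Knn by auto
qed

theorem corollary4p4:
  fixes n m :: nat and lam :: "nat \<Rightarrow> nat"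
  assumes "n \<ge> 1" and "m \<ge> 1" and "in_P m n lam"
  shows "\<forall>i\<in>{1..n}. int (lam i) = (\<Sum>j\<in>{i..n}. kk m n lam i j)"
proof -
  have "\<forall>i. n - i = t \<longrightarrow> 1 \<le> i \<longrightarrow> i \<le> n \<longrightarrow>
     (\<forall>j\<in>{i..n}. kk m n lam i j \<ge> 0) \<and> int (lam i) = (\<Sum>j\<in>{i..n}. kk m n lam i j)" for t
  proof (induction t rule: less_induct)
    case (less t)
    show ?case
    proof (intro allI impI)
      fix i assume h: "n - i = t" "1 \<le> i" "i \<le> n"
      show "(\<forall>j\<in>{i..n}. kk m n lam i j \<ge> 0) \<and> int (lam i) = (\<Sum>j\<in>{i..n}. kk m n lam i j)"
      proof (rule row_step[OF assms(3) h(2,3)])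
        fix l assume l: "i < l" "l \<le> n"
        show "(\<forall>j\<in>{l..n}. 0 \<le> kk m n lam l j) \<and> int (lam l) = (\<Sum>j\<in>{l..n}. kk m n lam l j)"
          using less.IH[of "n - l"] h l by auto
      qed
    qed
  qed
  then show ?thesis by auto
qed

end
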